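(* Let $(\mathcal{S},\mathcal{T},d)$ be a lazy task system such that both $\mathcal{S}$ and $\mathcal{T}$ are finite. Then the online problem $(\mathcal{S},\mathcal{T},d)$ is compact.
   Context: A generalized task system $(\mathcal{S},\mathcal{T},d)$: a set $\mathcal{S}$ of states, a set $\mathcal{T}$ of tasks, each task $t:\mathcal{S}\to\mathbb{R}_{\ge0}\cup\{\infty\}$ having at least one state with $t(s)\neq\infty$, and a function $d:\mathcal{S}\times\mathcal{S}\to\mathbb{R}_{\geq0}$. An input is $(s_0,t_1,\dots,t_n)$ with initial state $s_0$ and tasks $t_i\in\mathcal{T}$; an online algorithm outputs states $s_1,\dots,s_n$, $s_i$ computed from $s_0,t_1,\dots,t_i$, with $t_i(s_i)\neq\infty$, paying $d(s_{i-1},s_i)+t_i(s_i)$ in round $i$; the cost is the sum. It is a lazy task system if additionally $d(s,s')>0$ for $s\neq s'$ and $d(s,s')\leq d(s,s'')+d(s'',s')$ for all states. Competitiveness: a randomized algorithm (probability distribution over deterministic algorithms) $R$ is $c$-competitive if there is a constant $\alpha$ (independent of the input, including $s_0$) with $\mathbb{E}[R(\sigma)]\le c\,\mathrm{OPT}(\sigma)+\alpha$ for all $\sigma$. A minimization problem is compact if, whenever $c>1$ is a constant such that every randomized algorithm has competitive ratio at least $c$, then for every $\varepsilon>0$ and $\alpha\geq0$ there is an input distribution $p_{\alpha,\varepsilon}$ with finite support such that $\mathbb{E}_{p_{\alpha,\varepsilon}}[D(\sigma)]\geq(c-\varepsilon)\mathbb{E}_{p_{\alpha,\varepsilon}}[\mathrm{OPT}(\sigma)]+\alpha$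 for every deterministic algorithm $D$ without advice. *)

theory Defs
  imports "HOL-Probability.Probability"
begin

type_synonym 's task = "'s \<Rightarrow> ennreal"

definition task_system :: "'s set \<Rightarrow> 's task set \<Rightarrow> ('s \<Rightarrow> 's \<Rightarrow> real) \<Rightarrow> bool" where
  "task_system S T d \<longleftrightarrow>
     (\<forall>t\<in>T. \<exists>s\<in>S. t s \<noteq> \<top>) \<and> (\<forall>s\<in>S. \<forall>s'\<in>S. d s s' \<ge> 0)"

definition lazy_task_system :: "'s set \<Rightarrow> 's task set \<Rightarrow> ('s \<Rightarrow> 's \<Rightarrow> real) \<Rightarrow> bool" where
  "lazy_task_system S T d \<longleftrightarrow> task_system S T d \<and>
     (\<forall>s\<in>S. \<forall>s'\<in>S. s \<noteq> s' \<longrightarrow> d s s' > 0) \<and>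
     (\<forall>s\<in>S. \<forall>s'\<in>S. \<forall>s''\<in>S. d s s' \<le> d s s'' + d s'' s')"

definition inputs :: "'s set \<Rightarrow> 's task set \<Rightarrow> ('s \<times> 's task list) set" where
  "inputs S T = {(s0, ts). s0 \<in> S \<and> set ts \<subseteq> T}"

text \<open>Cost of serving tasks ts from s0 with the state sequence ss (ss ! i is s_(i+1)).\<close>
definition path_cost :: "('s \<Rightarrow> 's \<Rightarrow> real) \<Rightarrow> 's \<Rightarrow> 's task list \<Rightarrow> 's list \<Rightarrow> ennreal" where
  "path_cost d s0 ts ss = (\<Sum>i<length ts. ennreal (d ((s0 # ss) ! i) (ss ! i)) + (ts ! i) (ss ! i))"

definition opt :: "'s set \<Rightarrow> ('s \<Rightarrow> 's \<Rightarrow> real) \<Rightarrow> 's \<times> 's task list \<Rightarrow> ennreal" where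
  "opt S d \<sigma> = (INF ss \<in> {ss. length ss = length (snd \<sigma>) \<and> set ss \<subseteq> S}.
                  path_cost d (fst \<sigma>) (snd \<sigma>) ss)"

text \<open>A deterministic online algorithm maps (s0, [t1,...,ti]) to the state s_i.
  Online-ness is built in: s_i depends only on s0 and the prefix t1..ti.\<close>
type_synonym 's det_alg = "'s \<times> 's task list \<Rightarrow> 's"

definition alg_states :: "'s det_alg \<Rightarrow> 's \<Rightarrow> 's task list \<Rightarrow> 's list" where
  "alg_states D s0 ts = map (\<lambda>i. D (s0, take (Suc i) ts)) [0..<length ts]"

definition alg_cost :: "('s \<Rightarrow> 's \<Rightarrow> real) \<Rightarrow> 's det_alg \<Rightarrow> 's \<times> 's task list \<Rightarrow> ennreal" where
  "alg_cost d D \<sigma> = path_cost d (fst \<sigma>) (snd \<sigma>) (alg_states D (fst \<sigma>) (snd \<sigma>))"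

definition valid_det :: "'s set \<Rightarrow> 's task set \<Rightarrow> 's det_alg \<Rightarrow> bool" where
  "valid_det S T D \<longleftrightarrow> (\<forall>s0\<in>S. \<forall>ts. set ts \<subseteq> T \<and> ts \<noteq> [] \<longrightarrow>
      D (s0, ts) \<in> S \<and> last ts (D (s0, ts)) \<noteq> \<top>)"

definition alg_space :: "'s det_alg measure" where
  "alg_space = PiM UNIV (\<lambda>_. count_space UNIV)"

definition rand_alg :: "'s set \<Rightarrow> 's task set \<Rightarrow> 's det_alg measure \<Rightarrow> bool" where
  "rand_alg S T M \<longleftrightarrow> prob_space M \<and> sets M = sets alg_space \<and> (AE D in M. valid_det S T D)"

definition rand_competitive ::
  "'s set \<Rightarrow> 's task set \<Rightarrow> ('s \<Rightarrow> 's \<Rightarrow> real) \<Rightarrow> 's det_alg measure \<Rightarrow> real \<Rightarrow> bool" where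
  "rand_competitive S T d M c \<longleftrightarrow>
     (\<exists>\<alpha>::real. \<alpha> \<ge> 0 \<and> (\<forall>\<sigma>\<in>inputs S T.
        (\<integral>\<^sup>+ D. alg_cost d D \<sigma> \<partial>M) \<le> ennreal c * opt S d \<sigma> + ennreal \<alpha>))"

definition compact_problem :: "'s set \<Rightarrow> 's task set \<Rightarrow> ('s \<Rightarrow> 's \<Rightarrow> real) \<Rightarrow> bool" where
  "compact_problem S T d \<longleftrightarrow>
     (\<forall>c::real. c > 1 \<and>
        (\<forall>M. rand_alg S T M \<longrightarrow> (\<forall>c'<c. \<not> rand_competitive S T d M c')) \<longrightarrow>
        (\<forall>\<epsilon>::real. \<epsilon> > 0 \<longrightarrow> (\<forall>\<alpha>::real. \<alpha> \<ge> 0 \<longrightarrow>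
          (\<exists>p :: ('s \<times> 's task list) pmf. finite (set_pmf p) \<and> set_pmf p \<subseteq> inputs S T \<and>
             (\<forall>D. valid_det S T D \<longrightarrow>
                measure_pmf.expectation p (\<lambda>\<sigma>. enn2real (alg_cost d D \<sigma>))
                  \<ge> (c - \<epsilon>) * measure_pmf.expectation p (\<lambda>\<sigma>. enn2real (opt S d \<sigma>)) + \<alpha>)))))"

end

theory Submission
  imports Defs
begin

definition good :: "'s set \<Rightarrow> 's task \<Rightarrow> 's" where
  "good S t = (SOME s. s \<in> S \<and> t s \<noteq> \<top>)"

definition fixs :: "'s set \<Rightarrow> 's task \<Rightarrow> 's \<Rightarrow> 's" where
  "fixs S t y = (if y \<in> S \<and> t y \<noteq> \<top> then y else good S t)"

type_synonym 's idx = "'s \<times> 's task list \<times> 's"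

fun run :: "'s set \<Rightarrow> ('s idx \<Rightarrow> 's) stream \<Rightarrow> 's \<Rightarrow> 's task list \<Rightarrow> 's \<Rightarrow> 's task list \<Rightarrow> 's" where
  "run S gs s0 pre x [] = x"
| "run S gs s0 pre x (t#rest) = run S (stl gs) s0 (pre@[t]) (fixs S t (shd gs (s0, pre@[t], x))) rest"

fun rcost :: "'s set \<Rightarrow> ('s \<Rightarrow> 's \<Rightarrow> real) \<Rightarrow> ('s idx \<Rightarrow> 's) stream \<Rightarrow> 's \<Rightarrow> 's task list \<Rightarrow> 's \<Rightarrow> 's task list \<Rightarrow> ennreal" where
  "rcost S d gs s0 pre x [] = 0"
| "rcost S d gs s0 pre x (t#rest) = (let y = fixs S t (shd gs (s0, pre@[t], x)) in
      ennreal (d x y) + t y + rcost S d (stl gs) s0 (pre@[t]) y rest)"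

definition Phi :: "'s set \<Rightarrow> ('s idx \<Rightarrow> 's) stream \<Rightarrow> 's det_alg" where
  "Phi S gs = (\<lambda>(s0, ts). run S gs s0 [] s0 ts)"

lemma good: "t \<in> T \<Longrightarrow> task_system S T d \<Longrightarrow> good S t \<in> S \<and> t (good S t) \<noteq> \<top>"
  unfolding good_def task_system_def by (rule someI_ex) blast

lemma path_cost_run:
  "path_cost d x rest (map (\<lambda>i. run S gs s0 pre x (take (Suc i) rest)) [0..<length rest])
     = rcost S d gs s0 pre x rest"
proof (induction rest arbitrary: gs pre x)
  case Nil
  then show ?case by (simp add: path_cost_def)
next
  case (Cons t rest)
  define y where "y = fixs S t (shd gs (s0, pre@[t], x))"
  have IH: "path_cost d y rest (map (\<lambda>i. run S (stl gs) s0 (pre@[t]) y (take (Suc i) rest)) [0..<length rest])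
     = rcost S d (stl gs) s0 (pre@[t]) y rest" using Cons.IH .
  have m: "map (\<lambda>i. run S gs s0 pre x (take (Suc i) (t#rest))) [0..<length (t#rest)]
     = y # map (\<lambda>i. run S (stl gs) s0 (pre@[t]) y (take (Suc i) rest)) [0..<length rest]"
    by (simp add: y_def map_upt_Suc del: upt_Suc)
  show ?case
    unfolding m path_cost_def
    using IH unfolding path_cost_def
    by (simp only: length_Cons sum.lessThan_Suc_shift) (simp add: y_def Let_def)
qed

lemma alg_cost_Phi: "alg_cost d (Phi S gs) (s0, ts) = rcost S d gs s0 [] s0 ts"
  unfolding alg_cost_def alg_states_def Phi_def
  using path_cost_run[of d s0 ts S gs s0 "[]"] by simp

lemma run_last:
  assumes "task_system S T d" "set rest \<subseteq> T" "rest \<noteq> []"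
  shows "run S gs s0 pre x rest \<in> S \<and> last rest (run S gs s0 pre x rest) \<noteq> \<top>"
  using assms(2,3)
proof (induction rest arbitrary: gs pre x)
  case Nil then show ?case by simp
next
  case (Cons t rest)
  show ?case
  proof (cases "rest = []")
    case True
    with Cons.prems good[of t T S d] assms(1) show ?thesis by (simp add: fixs_def)
  next
    case False
    with Cons show ?thesis by simp
  qed
qed

lemma valid_Phi: "task_system S T d \<Longrightarrow> valid_det S T (Phi S gs)"
  unfolding valid_det_def Phi_def using run_last by fastforce

definition Gm :: "('s idx \<Rightarrow> 's pmf) \<Rightarrow> ('s idx \<Rightarrow> 's) measure" where
  "Gm \<beta> = PiM UNIV (\<lambda>j. measure_pmf (\<beta> j))"

lemma prob_Gm: "prob_space (Gm \<beta>)"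
  unfolding Gm_def by (intro prob_space_PiM prob_space_measure_pmf)

lemma meas_fin:
  assumes "f \<in> measurable M (count_space UNIV)" "finite R" "\<And>x. x \<in> space M \<Longrightarrow> f x \<in> R"
  shows "f \<in> measurable M (count_space R)"
proof -
  have "f -` {a} \<inter> space M \<in> sets M" for a
    using measurable_sets[OF assms(1), of "{a}"] by simp
  then show ?thesis using assms(2,3) by (auto simp: measurable_count_space_eq2)
qed

lemma meas_shd_j: "(\<lambda>gs. shd gs j) \<in> measurable (stream_space (Gm \<beta>)) (count_space UNIV)"
proof -
  have c: "(\<lambda>g. g j) \<in> measurable (Gm \<beta>) (measure_pmf (\<beta> j))"
    unfolding Gm_def by (rule measurable_component_singleton) simp
  have 1: "(\<lambda>gs. shd gs j) \<in> measurable (stream_space (Gm \<beta>)) (measure_pmf (\<beta> j))"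
    using measurable_compose[OF measurable_shd c] .
  show ?thesis using measurable_compose[OF 1, of "\<lambda>x. x" "count_space UNIV"] by simp
qed

lemma meas_fix_j:
  assumes "finite S"
  shows "(\<lambda>gs. fixs S t (shd gs j)) \<in> measurable (stream_space (Gm \<beta>)) (count_space (insert (good S t) S))"
proof (rule meas_fin)
  show "(\<lambda>gs. fixs S t (shd gs j)) \<in> measurable (stream_space (Gm \<beta>)) (count_space UNIV)"
    by (rule measurable_compose[OF meas_shd_j]) simp
qed (auto simp: assms fixs_def)

lemma meas_run:
  assumes "finite S"
  shows "(\<lambda>gs. run S gs s0 pre x rest) \<in> measurable (stream_space (Gm \<beta>)) (count_space UNIV)"
proof (induction rest arbitrary: pre x)
  case Nil then show ?case by simp
next
  case (Cons t rest)
  have "(\<lambda>gs. (\<lambda>y gs. run S (stl gs) s0 (pre@[t]) y rest) (fixs S t (shd gs (s0, pre@[t], x))) gs)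
     \<in> measurable (stream_space (Gm \<beta>)) (count_space UNIV)"
  proof (rule measurable_compose_countable'[OF _ meas_fix_j[OF assms]])
    fix y
    show "(\<lambda>gs. run S (stl gs) s0 (pre@[t]) y rest) \<in> measurable (stream_space (Gm \<beta>)) (count_space UNIV)"
      using measurable_compose[OF measurable_stl Cons.IH] by simp
  qed (simp add: assms countable_finite)
  then show ?case by simp
qed

lemma meas_rcost:
  assumes "finite S"
  shows "(\<lambda>gs. rcost S d gs s0 pre x rest) \<in> borel_measurable (stream_space (Gm \<beta>))"
proof (induction rest arbitrary: pre x)
  case Nil then show ?case by simp
next
  case (Cons t rest)
  have "(\<lambda>gs. (\<lambda>y gs. ennreal (d x y) + t y + rcost S d (stl gs) s0 (pre@[t]) y rest) (fixs S t (shd gs (s0, pre@[t], x))) gs)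
     \<in> borel_measurable (stream_space (Gm \<beta>))"
  proof (rule measurable_compose_countable'[OF _ meas_fix_j[OF assms]])
    fix y
    have "(\<lambda>gs. rcost S d (stl gs) s0 (pre@[t]) y rest) \<in> borel_measurable (stream_space (Gm \<beta>))"
      using measurable_compose[OF measurable_stl Cons.IH] by simp
    then show "(\<lambda>gs. ennreal (d x y) + t y + rcost S d (stl gs) s0 (pre@[t]) y rest) \<in> borel_measurable (stream_space (Gm \<beta>))"
      by measurable
  qed (simp add: assms countable_finite)
  then show ?case by (simp add: Let_def)
qed

lemma nn_integral_component:
  "(\<integral>\<^sup>+g. H (g j) \<partial>Gm \<beta>) = (\<integral>\<^sup>+z. H z \<partial>measure_pmf (\<beta> j))"
proof -
  have "(\<integral>\<^sup>+z. H z \<partial>measure_pmf (\<beta> j)) = (\<integral>\<^sup>+z. H z \<partial>distr (Gm \<beta>) (measure_pmf (\<beta> j)) (\<lambda>g. g j))"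
    unfolding Gm_def by (subst distr_PiM_component) (auto intro: prob_space_measure_pmf)
  also have "\<dots> = (\<integral>\<^sup>+g. H (g j) \<partial>Gm \<beta>)"
    by (rule nn_integral_distr) (auto simp: Gm_def intro: measurable_component_singleton)
  finally show ?thesis ..
qed

lemma W_step:
  assumes "finite S"
  shows "(\<integral>\<^sup>+gs. rcost S d gs s0 pre x (t#rest) \<partial>stream_space (Gm \<beta>))
    = (\<integral>\<^sup>+z. ennreal (d x (fixs S t z)) + t (fixs S t z) +
          (\<integral>\<^sup>+gs. rcost S d gs s0 (pre@[t]) (fixs S t z) rest \<partial>stream_space (Gm \<beta>)) \<partial>measure_pmf (\<beta> (s0, pre@[t], x)))"
    (is "_ = ?R")
proof -
  interpret G: prob_space "Gm \<beta>" by (rule prob_Gm)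
  interpret GS: prob_space "stream_space (Gm \<beta>)" by (rule G.prob_space_stream_space)
  have "(\<integral>\<^sup>+gs. rcost S d gs s0 pre x (t#rest) \<partial>stream_space (Gm \<beta>))
     = (\<integral>\<^sup>+g. (\<integral>\<^sup>+gs. rcost S d (g ## gs) s0 pre x (t#rest) \<partial>stream_space (Gm \<beta>)) \<partial>Gm \<beta>)"
    by (rule G.nn_integral_stream_space[OF meas_rcost[OF assms]])
  also have "\<dots> = (\<integral>\<^sup>+g. (\<lambda>z. ennreal (d x (fixs S t z)) + t (fixs S t z) +
          (\<integral>\<^sup>+gs. rcost S d gs s0 (pre@[t]) (fixs S t z) rest \<partial>stream_space (Gm \<beta>))) (g (s0, pre@[t], x)) \<partial>Gm \<beta>)"
  proof (rule nn_integral_cong)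
    fix g
    show "(\<integral>\<^sup>+gs. rcost S d (g ## gs) s0 pre x (t#rest) \<partial>stream_space (Gm \<beta>)) =
      (\<lambda>z. ennreal (d x (fixs S t z)) + t (fixs S t z) +
          (\<integral>\<^sup>+gs. rcost S d gs s0 (pre@[t]) (fixs S t z) rest \<partial>stream_space (Gm \<beta>))) (g (s0, pre@[t], x))"
      apply (simp add: Let_def)
      apply (subst nn_integral_add)
        apply (auto intro: meas_rcost[OF assms])
      apply (simp add: GS.emeasure_space_1)
      done
  qed
  also have "\<dots> = ?R" by (rule nn_integral_component)
  finally show ?thesis .
qed

type_synonym 's fl = "('s \<times> 's task list \<times> 's \<times> 's) \<Rightarrow> real"

definition mu :: "'s set \<Rightarrow> 's fl \<Rightarrow> 's \<Rightarrow> 's task list \<Rightarrow> 's \<Rightarrow> real" where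
  "mu S \<pi> s0 ts z = (if ts = [] then (if z = s0 then 1 else 0) else (\<Sum>y\<in>S. \<pi> (s0, ts, y, z)))"

definition flow :: "'s set \<Rightarrow> 's task set \<Rightarrow> 's fl \<Rightarrow> bool" where
  "flow S T \<pi> \<longleftrightarrow> (\<forall>i. 0 \<le> \<pi> i \<and> \<pi> i \<le> 1) \<and>
    (\<forall>s0\<in>S. \<forall>pre t. set pre \<subseteq> T \<longrightarrow> t \<in> T \<longrightarrow> (\<forall>x\<in>S. (\<Sum>z\<in>S. \<pi> (s0, pre@[t], x, z)) = mu S \<pi> s0 pre x)) \<and>
    (\<forall>s0\<in>S. \<forall>pre t. set pre \<subseteq> T \<longrightarrow> t \<in> T \<longrightarrow> (\<forall>x\<in>S. \<forall>z\<in>S. t z = \<top> \<longrightarrow> \<pi> (s0, pre@[t], x, z) = 0))"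

definition FC :: "'s set \<Rightarrow> ('s \<Rightarrow> 's \<Rightarrow> real) \<Rightarrow> 's fl \<Rightarrow> 's \<Rightarrow> 's task list \<Rightarrow> 's task list \<Rightarrow> real" where
  "FC S d \<pi> s0 pre rest = (\<Sum>i<length rest. \<Sum>x\<in>S. \<Sum>z\<in>S.
      \<pi> (s0, pre @ take (Suc i) rest, x, z) * (d x z + enn2real ((rest!i) z)))"

lemma FC_Nil[simp]: "FC S d \<pi> s0 pre [] = 0"
  by (simp add: FC_def)

lemma FC_Cons: "FC S d \<pi> s0 pre (t#rest) =
   (\<Sum>x\<in>S. \<Sum>z\<in>S. \<pi> (s0, pre@[t], x, z) * (d x z + enn2real (t z))) + FC S d \<pi> s0 (pre@[t]) rest"
  unfolding FC_def by (simp only: length_Cons sum.lessThan_Suc_shift) simp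

definition beta :: "'s set \<Rightarrow> 's task set \<Rightarrow> 's fl \<Rightarrow> 's idx \<Rightarrow> 's pmf" where
  "beta S T \<pi> = (\<lambda>(s0, ts, x). if s0 \<in> S \<and> ts \<noteq> [] \<and> set ts \<subseteq> T \<and> x \<in> S \<and> mu S \<pi> s0 (butlast ts) x > 0
     then embed_pmf (\<lambda>z. if z \<in> S then \<pi> (s0, ts, x, z) / mu S \<pi> s0 (butlast ts) x else 0)
     else return_pmf (good S (last ts)))"

lemma flow_nn: assumes "flow S T \<pi>" shows "0 \<le> \<pi> i"
proof -
  have "\<forall>i. 0 \<le> \<pi> i \<and> \<pi> i \<le> 1" using assms unfolding flow_def by (rule conjunct1)
  then show ?thesis by blast
qed

lemma mu_nonneg: "flow S T \<pi> \<Longrightarrow> 0 \<le> mu S \<pi> s0 ts z"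
  unfolding mu_def by (auto intro: sum_nonneg flow_nn)

lemma beta_props:
  assumes ts: "task_system S T d" and fin: "finite S" and fl: "flow S T \<pi>"
    and s0: "s0 \<in> S" and pre: "set pre \<subseteq> T" and t: "t \<in> T" and x: "x \<in> S"
  shows "set_pmf (beta S T \<pi> (s0, pre@[t], x)) \<subseteq> {z\<in>S. t z \<noteq> \<top>}"
    and "\<And>z. z \<in> S \<Longrightarrow> mu S \<pi> s0 pre x * pmf (beta S T \<pi> (s0, pre@[t], x)) z = \<pi> (s0, pre@[t], x, z)"
proof -
  define m where "m = mu S \<pi> s0 pre x"
  have nn: "\<And>i. 0 \<le> \<pi> i" using fl by (rule flow_nn)
  have sumz: "(\<Sum>z\<in>S. \<pi> (s0, pre@[t], x, z)) = m"
    using fl s0 pre t x unfolding flow_def m_def by blast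
  have zero: "\<And>z. z \<in> S \<Longrightarrow> t z = \<top> \<Longrightarrow> \<pi> (s0, pre@[t], x, z) = 0"
    using fl s0 pre t x unfolding flow_def by blast
  have "set_pmf (beta S T \<pi> (s0, pre@[t], x)) \<subseteq> {z\<in>S. t z \<noteq> \<top>} \<and>
        (\<forall>z\<in>S. m * pmf (beta S T \<pi> (s0, pre@[t], x)) z = \<pi> (s0, pre@[t], x, z))"
  proof (cases "m > 0")
    case True
    define f where "f = (\<lambda>z. if z \<in> S then \<pi> (s0, pre@[t], x, z) / m else 0)"
    have b: "beta S T \<pi> (s0, pre@[t], x) = embed_pmf f"
    proof -
      have bl: "butlast (pre@[t]) = pre" by simp
      show ?thesis using True s0 pre t x unfolding beta_def f_def m_def
        by (simp add: bl cong: if_cong)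
    qed
    have fnn: "\<And>z. 0 \<le> f z" unfolding f_def using nn True by simp
    have "(\<integral>\<^sup>+z. ennreal (f z) \<partial>count_space UNIV) = (\<Sum>z\<in>S. ennreal (f z))"
      by (rule nn_integral_count_space') (auto simp: fin f_def)
    also have "\<dots> = ennreal (\<Sum>z\<in>S. f z)" using fnn by simp
    also have "(\<Sum>z\<in>S. f z) = (\<Sum>z\<in>S. \<pi> (s0, pre@[t], x, z)) / m"
      unfolding f_def by (simp add: sum_divide_distrib)
    also have "\<dots> = 1" using sumz True by simp
    finally have int1: "(\<integral>\<^sup>+z. ennreal (f z) \<partial>count_space UNIV) = 1" by simp
    have pm: "pmf (embed_pmf f) z = f z" for z
      by (rule pmf_embed_pmf[OF fnn int1])
    have "set_pmf (embed_pmf f) = {z. f z \<noteq> 0}"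
      by (rule set_embed_pmf[OF fnn int1])
    then have "set_pmf (embed_pmf f) \<subseteq> {z\<in>S. t z \<noteq> \<top>}"
      using zero unfolding f_def by auto
    then show ?thesis using b pm True by (simp add: f_def)
  next
    case False
    then have m0: "m = 0" using mu_nonneg[OF fl, of s0 pre x] unfolding m_def by simp
    have b: "beta S T \<pi> (s0, pre@[t], x) = return_pmf (good S t)"
      using False unfolding beta_def m_def by auto
    have "\<forall>z\<in>S. \<pi> (s0, pre@[t], x, z) = 0"
      using sumz m0 nn fin by (simp add: sum_nonneg_eq_0_iff)
    then show ?thesis using b m0 good[OF t ts] by simp
  qed
  then show "set_pmf (beta S T \<pi> (s0, pre@[t], x)) \<subseteq> {z\<in>S. t z \<noteq> \<top>}"
    and "\<And>z. z \<in> S \<Longrightarrow> mu S \<pi> s0 pre x * pmf (beta S T \<pi> (s0, pre@[t], x)) z = \<pi> (s0, pre@[t], x, z)"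
    unfolding m_def by auto
qed

lemma d_nn: "task_system S T d \<Longrightarrow> x \<in> S \<Longrightarrow> z \<in> S \<Longrightarrow> 0 \<le> d x z"
  unfolding task_system_def by blast

lemma FC_nonneg: "task_system S T d \<Longrightarrow> flow S T \<pi> \<Longrightarrow> 0 \<le> FC S d \<pi> s0 pre rest"
proof -
  assume ts: "task_system S T d" and fl: "flow S T \<pi>"
  show ?thesis unfolding FC_def
    by (intro sum_nonneg mult_nonneg_nonneg add_nonneg_nonneg flow_nn[OF fl] d_nn[OF ts] enn2real_nonneg) auto
qed

lemma W_flow:
  assumes ts: "task_system S T d" and fin: "finite S" and fl: "flow S T \<pi>" and s0: "s0 \<in> S"
  shows "set pre \<subseteq> T \<Longrightarrow> set rest \<subseteq> T \<Longrightarrow>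
    (\<Sum>x\<in>S. ennreal (mu S \<pi> s0 pre x) * (\<integral>\<^sup>+gs. rcost S d gs s0 pre x rest \<partial>stream_space (Gm (beta S T \<pi>))))
     = ennreal (FC S d \<pi> s0 pre rest)"
proof (induction rest arbitrary: pre)
  case Nil
  then show ?case by simp
next
  case (Cons t rest)
  define B where "B = beta S T \<pi>"
  define W where "W = (\<lambda>p y r. \<integral>\<^sup>+gs. rcost S d gs s0 p y r \<partial>stream_space (Gm B))"
  have t: "t \<in> T" and rest: "set rest \<subseteq> T" using Cons.prems by auto
  have pre': "set (pre@[t]) \<subseteq> T" using Cons.prems by auto
  have nn: "\<And>i. 0 \<le> \<pi> i" using fl by (rule flow_nn)
  have IH: "(\<Sum>z\<in>S. ennreal (mu S \<pi> s0 (pre@[t]) z) * W (pre@[t]) z rest) = ennreal (FC S d \<pi> s0 (pre@[t]) rest)"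
    using Cons.IH[OF pre' rest] unfolding W_def B_def .
  define H where "H = (\<lambda>x z. ennreal (d x z) + t z + W (pre@[t]) z rest)"
  have step: "W pre x (t#rest) = (\<Sum>z\<in>S. H x z * ennreal (pmf (B (s0, pre@[t], x)) z))" if x: "x \<in> S" for x
  proof -
    have sp: "set_pmf (B (s0, pre@[t], x)) \<subseteq> {z\<in>S. t z \<noteq> \<top>}"
      unfolding B_def using Cons.prems by (intro beta_props(1)[OF ts fin fl s0 _ t x]) auto
    have "W pre x (t#rest) = (\<integral>\<^sup>+z. H x (fixs S t z) \<partial>measure_pmf (B (s0, pre@[t], x)))"
      unfolding W_def H_def by (rule W_step[OF fin])
    also have "\<dots> = (\<Sum>z\<in>S. H x (fixs S t z) * pmf (B (s0, pre@[t], x)) z)"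
      by (rule nn_integral_measure_pmf_support) (use fin sp in auto)
    also have "\<dots> = (\<Sum>z\<in>S. H x z * ennreal (pmf (B (s0, pre@[t], x)) z))"
    proof (rule sum.cong)
      fix z assume z: "z \<in> S"
      show "H x (fixs S t z) * pmf (B (s0, pre@[t], x)) z = H x z * ennreal (pmf (B (s0, pre@[t], x)) z)"
      proof (cases "z \<in> set_pmf (B (s0, pre@[t], x))")
        case True
        then have "fixs S t z = z" using sp by (auto simp: fixs_def)
        then show ?thesis by simp
      next
        case False
        then show ?thesis by (simp add: set_pmf_eq)
      qed
    qed simp
    finally show ?thesis .
  qed
  have tm: "ennreal (mu S \<pi> s0 pre x) * (H x z * ennreal (pmf (B (s0, pre@[t], x)) z))
      = ennreal (\<pi> (s0, pre@[t], x, z) * (d x z + enn2real (t z))) + ennreal (\<pi> (s0, pre@[t], x, z)) * W (pre@[t]) z rest"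
    if x: "x \<in> S" and z: "z \<in> S" for x z
  proof -
    have e0: "mu S \<pi> s0 pre x * pmf (B (s0, pre@[t], x)) z = \<pi> (s0, pre@[t], x, z)"
      unfolding B_def using Cons.prems by (intro beta_props(2)[OF ts fin fl s0 _ t x z]) auto
    have e: "ennreal (mu S \<pi> s0 pre x) * ennreal (pmf (B (s0, pre@[t], x)) z) = ennreal (\<pi> (s0, pre@[t], x, z))"
      using e0 ennreal_mult[OF mu_nonneg[OF fl] pmf_nonneg, of s0 pre x "B (s0, pre@[t], x)" z] by simp
    have dn: "0 \<le> d x z" using d_nn[OF ts x z] .
    have a: "ennreal (\<pi> (s0, pre@[t], x, z)) * (ennreal (d x z) + t z) = ennreal (\<pi> (s0, pre@[t], x, z) * (d x z + enn2real (t z)))"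
    proof (cases "t z = \<top>")
      case True
      have "\<forall>s0\<in>S. \<forall>pre t. set pre \<subseteq> T \<longrightarrow> t \<in> T \<longrightarrow> (\<forall>x\<in>S. \<forall>z\<in>S. t z = \<top> \<longrightarrow> \<pi> (s0, pre@[t], x, z) = 0)"
        using fl unfolding flow_def by (elim conjE)
      then have "\<pi> (s0, pre@[t], x, z) = 0" using s0 Cons.prems t x z True by blast
      then show ?thesis by simp
    next
      case False
      then have tz: "t z = ennreal (enn2real (t z))" by (simp add: less_top)
      have "ennreal (\<pi> (s0, pre@[t], x, z)) * (ennreal (d x z) + ennreal (enn2real (t z)))
          = ennreal (\<pi> (s0, pre@[t], x, z)) * ennreal (d x z + enn2real (t z))"
        using dn by simp
      also have "\<dots> = ennreal (\<pi> (s0, pre@[t], x, z) * (d x z + enn2real (t z)))"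
        by (rule ennreal_mult[symmetric]) (use nn dn in auto)
      finally show ?thesis using tz by metis
    qed
    have "ennreal (mu S \<pi> s0 pre x) * (H x z * ennreal (pmf (B (s0, pre@[t], x)) z))
        = (ennreal (mu S \<pi> s0 pre x) * ennreal (pmf (B (s0, pre@[t], x)) z)) * H x z"
      by (simp add: ac_simps)
    also have "\<dots> = ennreal (\<pi> (s0, pre@[t], x, z)) * H x z"
      using e by simp
    also have "\<dots> = ennreal (\<pi> (s0, pre@[t], x, z)) * (ennreal (d x z) + t z) + ennreal (\<pi> (s0, pre@[t], x, z)) * W (pre@[t]) z rest"
      unfolding H_def by (simp add: distrib_left)
    finally show ?thesis using a by simp
  qed
  have "(\<Sum>x\<in>S. ennreal (mu S \<pi> s0 pre x) * W pre x (t#rest))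
     = (\<Sum>x\<in>S. \<Sum>z\<in>S. ennreal (mu S \<pi> s0 pre x) * (H x z * ennreal (pmf (B (s0, pre@[t], x)) z)))"
    by (rule sum.cong) (simp_all add: step sum_distrib_left)
  also have "\<dots> = (\<Sum>x\<in>S. \<Sum>z\<in>S. ennreal (\<pi> (s0, pre@[t], x, z) * (d x z + enn2real (t z)))
        + ennreal (\<pi> (s0, pre@[t], x, z)) * W (pre@[t]) z rest)"
    by (intro sum.cong refl tm)
  also have "\<dots> = (\<Sum>x\<in>S. \<Sum>z\<in>S. ennreal (\<pi> (s0, pre@[t], x, z) * (d x z + enn2real (t z))))
        + (\<Sum>x\<in>S. \<Sum>z\<in>S. ennreal (\<pi> (s0, pre@[t], x, z)) * W (pre@[t]) z rest)"
    by (simp only: sum.distrib)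
  also have "(\<Sum>x\<in>S. \<Sum>z\<in>S. ennreal (\<pi> (s0, pre@[t], x, z)) * W (pre@[t]) z rest)
      = (\<Sum>z\<in>S. \<Sum>x\<in>S. ennreal (\<pi> (s0, pre@[t], x, z)) * W (pre@[t]) z rest)"
    by (rule sum.swap)
  also have "\<dots> = (\<Sum>z\<in>S. (\<Sum>x\<in>S. ennreal (\<pi> (s0, pre@[t], x, z))) * W (pre@[t]) z rest)"
    by (simp only: sum_distrib_right)
  also have "\<dots> = (\<Sum>z\<in>S. ennreal (mu S \<pi> s0 (pre@[t]) z) * W (pre@[t]) z rest)"
    by (rule sum.cong) (simp_all add: nn mu_def sum_nonneg)
  also have "\<dots> = ennreal (FC S d \<pi> s0 (pre@[t]) rest)" by (rule IH)
  also have "(\<Sum>x\<in>S. \<Sum>z\<in>S. ennreal (\<pi> (s0, pre@[t], x, z) * (d x z + enn2real (t z))))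
      = ennreal (\<Sum>x\<in>S. \<Sum>z\<in>S. \<pi> (s0, pre@[t], x, z) * (d x z + enn2real (t z)))"
    using nn d_nn[OF ts] by (simp add: sum_nonneg)
  also have "ennreal (\<Sum>x\<in>S. \<Sum>z\<in>S. \<pi> (s0, pre@[t], x, z) * (d x z + enn2real (t z))) + ennreal (FC S d \<pi> s0 (pre@[t]) rest)
     = ennreal (FC S d \<pi> s0 pre (t#rest))"
    unfolding FC_Cons
    by (rule ennreal_plus[symmetric]) (use nn d_nn[OF ts] FC_nonneg[OF ts fl] in \<open>auto intro!: sum_nonneg\<close>)
  finally show ?case unfolding W_def B_def .
qed

lemma nn_integral_distr_le:
  assumes g: "g \<in> measurable M N" and h: "h \<in> borel_measurable N"
    and le: "\<And>x. x \<in> space N \<Longrightarrow> f x \<le> h x" and eq: "\<And>\<omega>. \<omega> \<in> space M \<Longrightarrow> h (g \<omega>) = f (g \<omega>)"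
  shows "(\<integral>\<^sup>+x. f x \<partial>distr M N g) \<le> (\<integral>\<^sup>+\<omega>. f (g \<omega>) \<partial>M)"
proof -
  have "(\<integral>\<^sup>+x. f x \<partial>distr M N g) \<le> (\<integral>\<^sup>+x. h x \<partial>distr M N g)"
    by (rule nn_integral_mono) (simp add: le)
  also have "\<dots> = (\<integral>\<^sup>+\<omega>. h (g \<omega>) \<partial>M)" by (rule nn_integral_distr[OF g]) (use h in simp)
  also have "\<dots> = (\<integral>\<^sup>+\<omega>. f (g \<omega>) \<partial>M)" by (rule nn_integral_cong) (simp add: eq)
  finally show ?thesis .
qed

lemma space_alg_space[simp]: "space alg_space = UNIV"
  unfolding alg_space_def by (simp add: space_PiM)

lemma meas_coord: "(\<lambda>D. D a) \<in> measurable alg_space (count_space UNIV)"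
  unfolding alg_space_def by (rule measurable_component_singleton) simp

lemma pred_coord: "{D. P (D a)} \<in> sets alg_space"
proof -
  have "(\<lambda>D. D a) -` {y. P y} \<inter> space alg_space \<in> sets alg_space"
    by (rule measurable_sets[OF meas_coord]) simp
  then show ?thesis by (simp add: vimage_def)
qed

lemma meas_Phi: "finite S \<Longrightarrow> Phi S \<in> measurable (stream_space (Gm \<beta>)) alg_space"
  unfolding alg_space_def Phi_def
  by (rule measurable_PiM_single'[where f="\<lambda>i gs. case i of (s0, ts) \<Rightarrow> run S gs s0 [] s0 ts", simplified])
     (auto split: prod.split intro: meas_run)

lemma valid_sets:
  assumes "finite S" "finite T"
  shows "{D \<in> space alg_space. valid_det S T D} \<in> sets alg_space"
proof -
  define X where "X = S \<times> {ts. set ts \<subseteq> T \<and> ts \<noteq> []}"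
  have "X \<subseteq> S \<times> lists T" unfolding X_def by auto
  moreover have "countable (S \<times> lists T)" using assms by (auto intro: countable_finite)
  ultimately have cX: "countable X" by (rule countable_subset)
  have eq: "{D \<in> space alg_space. valid_det S T D} =
      space alg_space - (\<Union>a\<in>X. {D. \<not> (D a \<in> S \<and> last (snd a) (D a) \<noteq> \<top>)})"
    unfolding valid_det_def X_def by fastforce
  show ?thesis unfolding eq
    by (intro sets.Diff sets.top sets.countable_UN'' cX pred_coord)
qed

lemma opt_finite:
  assumes ts: "task_system S T d" and "s0 \<in> S" "set tsl \<subseteq> T"
  shows "opt S d (s0, tsl) < \<top>"
proof -
  define ss where "ss = map (good S) tsl"
  have gs: "\<And>t. t \<in> T \<Longrightarrow> good S t \<in> S \<and> t (good S t) \<noteq> \<top>" using good[OF _ ts] by blast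
  have "set ss \<subseteq> S" unfolding ss_def using gs assms(3) by auto
  then have "opt S d (s0, tsl) \<le> path_cost d s0 tsl ss"
    unfolding opt_def fst_conv snd_conv by (intro INF_lower) (auto simp: ss_def)
  also have "\<dots> < \<top>"
    unfolding path_cost_def ss_def using gs assms(3) by (auto simp: less_top[symmetric]) (meson nth_mem subsetD)
  finally show ?thesis .
qed

lemma alg_cost_bound:
  assumes fin: "finite S"
  shows "\<exists>h. h \<in> borel_measurable alg_space \<and> (\<forall>D. alg_cost d D (s0, tsl) \<le> h D) \<and>
     (\<forall>D. s0 \<in> S \<longrightarrow> (\<forall>i<length tsl. D (s0, take (Suc i) tsl) \<in> S) \<longrightarrow> h D = alg_cost d D (s0, tsl))"
proof -
  define Pv where "Pv = (\<lambda>i (D::'a det_alg). if i = 0 then s0 else D (s0, take i tsl))"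
  define Qv where "Qv = (\<lambda>i (D::'a det_alg). D (s0, take (Suc i) tsl))"
  define c where "c = (\<lambda>i x z. ennreal (d x z) + (tsl!i) z)"
  define h where "h = (\<lambda>D. \<Sum>i<length tsl. (if Pv i D \<in> S \<and> Qv i D \<in> S then
      (\<Sum>x\<in>S. \<Sum>z\<in>S. (if Pv i D = x \<and> Qv i D = z then c i x z else 0)) else \<top>))"
  have ac: "alg_cost d D (s0, tsl) = (\<Sum>i<length tsl. c i (Pv i D) (Qv i D))" for D
    unfolding alg_cost_def path_cost_def alg_states_def c_def Pv_def Qv_def
    by (intro sum.cong refl) (auto simp: nth_Cons')
  have mP[measurable]: "Pv i \<in> measurable alg_space (count_space UNIV)" for i
    unfolding Pv_def by (cases "i = 0") (simp_all add: meas_coord)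
  have mQ[measurable]: "Qv i \<in> measurable alg_space (count_space UNIV)" for i
    unfolding Qv_def by (simp add: meas_coord)
  have [measurable]: "Measurable.pred alg_space (\<lambda>D. Pv i D \<in> S)" for i
    using measurable_compose[OF mP, of "\<lambda>y. y \<in> S" "count_space UNIV"] by simp
  have [measurable]: "Measurable.pred alg_space (\<lambda>D. Qv i D \<in> S)" for i
    using measurable_compose[OF mQ, of "\<lambda>y. y \<in> S" "count_space UNIV"] by simp
  have hm: "h \<in> borel_measurable alg_space"
    unfolding h_def by measurable
  have inner: "(\<Sum>x\<in>S. \<Sum>z\<in>S. (if Pv i D = x \<and> Qv i D = z then c i x z else 0)) = c i (Pv i D) (Qv i D)"
    if "Pv i D \<in> S" "Qv i D \<in> S" for i D
  proof -
    have "(\<Sum>x\<in>S. \<Sum>z\<in>S. (if Pv i D = x \<and> Qv i D = z then c i x z else 0))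
        = (\<Sum>x\<in>S. if Pv i D = x then c i x (Qv i D) else 0)"
      by (intro sum.cong refl) (auto simp: fin that if_distrib cong: if_cong)
    also have "\<dots> = c i (Pv i D) (Qv i D)" using that fin by simp
    finally show ?thesis .
  qed
  have le: "alg_cost d D (s0, tsl) \<le> h D" for D
    unfolding ac h_def by (intro sum_mono) (auto simp: inner)
  have eq: "h D = alg_cost d D (s0, tsl)" if "s0 \<in> S" "\<forall>i<length tsl. D (s0, take (Suc i) tsl) \<in> S" for D
  proof -
    have "Pv i D \<in> S \<and> Qv i D \<in> S" if "i < length tsl" for i
      using \<open>s0 \<in> S\<close> \<open>\<forall>i<length tsl. D (s0, take (Suc i) tsl) \<in> S\<close> that unfolding Pv_def Qv_def
      by (cases i) auto
    then show ?thesis unfolding ac h_def by (intro sum.cong refl) (auto simp: inner)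
  qed
  show ?thesis using hm le eq by blast
qed

lemma expected_cost:
  assumes ts: "task_system S T d" and fin: "finite S" and fl: "flow S T \<pi>" and s0: "s0 \<in> S"
    and tsl: "set tsl \<subseteq> T"
  shows "(\<integral>\<^sup>+gs. rcost S d gs s0 [] s0 tsl \<partial>stream_space (Gm (beta S T \<pi>))) = ennreal (FC S d \<pi> s0 [] tsl)"
proof -
  define W where "W = (\<lambda>x. \<integral>\<^sup>+gs. rcost S d gs s0 [] x tsl \<partial>stream_space (Gm (beta S T \<pi>)))"
  have "(\<Sum>x\<in>S. ennreal (mu S \<pi> s0 [] x) * W x) = ennreal (FC S d \<pi> s0 [] tsl)"
    unfolding W_def by (rule W_flow[OF ts fin fl s0]) (use tsl in auto)
  moreover have "(\<Sum>x\<in>S. ennreal (mu S \<pi> s0 [] x) * W x) = (\<Sum>x\<in>S. if x = s0 then W x else 0)"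
    by (intro sum.cong refl) (simp add: mu_def)
  moreover have "(\<Sum>x\<in>S. if x = s0 then W x else 0) = W s0" using fin s0 by simp
  ultimately show ?thesis unfolding W_def by simp
qed

lemma flow_competitive:
  assumes ts: "task_system S T d" and fin: "finite S" and finT: "finite T" and fl: "flow S T \<pi>"
    and \<alpha>: "0 \<le> \<alpha>"
    and gd: "\<And>s0 tsl. s0 \<in> S \<Longrightarrow> set tsl \<subseteq> T \<Longrightarrow> FC S d \<pi> s0 [] tsl \<le> c' * enn2real (opt S d (s0, tsl)) + \<alpha>"
  shows "\<exists>M. rand_alg S T M \<and> rand_competitive S T d M c'"
proof -
  define GS where "GS = stream_space (Gm (beta S T \<pi>))"
  define M where "M = distr GS alg_space (Phi S)"
  interpret G: prob_space "Gm (beta S T \<pi>)" by (rule prob_Gm)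
  interpret GS: prob_space GS unfolding GS_def by (rule G.prob_space_stream_space)
  have mP: "Phi S \<in> measurable GS alg_space" unfolding GS_def by (rule meas_Phi[OF fin])
  have "prob_space M" unfolding M_def by (rule GS.prob_space_distr[OF mP])
  moreover have "sets M = sets alg_space" unfolding M_def by simp
  moreover have "AE D in M. valid_det S T D"
    unfolding M_def
    by (subst AE_distr_iff[OF mP valid_sets[OF fin finT]]) (simp add: valid_Phi[OF ts])
  ultimately have ra: "rand_alg S T M" unfolding rand_alg_def by blast
  have "(\<integral>\<^sup>+D. alg_cost d D \<sigma> \<partial>M) \<le> ennreal c' * opt S d \<sigma> + ennreal \<alpha>" if \<sigma>in: "\<sigma> \<in> inputs S T" for \<sigma>
  proof -
    obtain s0 tsl where \<sigma>: "\<sigma> = (s0, tsl)" and s0: "s0 \<in> S" and tsl: "set tsl \<subseteq> T"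
      by (cases \<sigma>) (use \<sigma>in in \<open>auto simp: inputs_def\<close>)
    obtain h where hm: "h \<in> borel_measurable alg_space" and hle: "\<And>D. alg_cost d D (s0, tsl) \<le> h D"
      and heq: "\<And>D. s0 \<in> S \<Longrightarrow> (\<forall>i<length tsl. D (s0, take (Suc i) tsl) \<in> S) \<Longrightarrow> h D = alg_cost d D (s0, tsl)"
      using alg_cost_bound[OF fin, of d s0 tsl] by blast
    have "(\<integral>\<^sup>+D. alg_cost d D \<sigma> \<partial>M) \<le> (\<integral>\<^sup>+gs. alg_cost d (Phi S gs) (s0, tsl) \<partial>GS)"
      unfolding M_def \<sigma>
    proof (rule nn_integral_distr_le[OF mP hm])
      fix gs
      have "\<forall>i<length tsl. Phi S gs (s0, take (Suc i) tsl) \<in> S"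
      proof (intro allI impI)
        fix i assume "i < length tsl"
        then have "take (Suc i) tsl \<noteq> []" by (cases tsl) auto
        moreover have "set (take (Suc i) tsl) \<subseteq> T" using tsl by (meson order_trans set_take_subset)
        ultimately show "Phi S gs (s0, take (Suc i) tsl) \<in> S"
          unfolding Phi_def using run_last[OF ts] by auto
      qed
      then show "h (Phi S gs) = alg_cost d (Phi S gs) (s0, tsl)" using heq s0 by blast
    qed (use hle in auto)
    also have "\<dots> = ennreal (FC S d \<pi> s0 [] tsl)"
      unfolding alg_cost_Phi GS_def by (rule expected_cost[OF ts fin fl s0 tsl])
    also have "\<dots> \<le> ennreal (c' * enn2real (opt S d (s0, tsl)) + \<alpha>)"
      using gd[OF s0 tsl] by (rule ennreal_leI)
    also have "\<dots> \<le> ennreal c' * opt S d \<sigma> + ennreal \<alpha>"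
    proof -
      have ofin: "opt S d (s0, tsl) = ennreal (enn2real (opt S d (s0, tsl)))"
        using opt_finite[OF ts s0 tsl] by simp
      define ov where "ov = enn2real (opt S d (s0, tsl))"
      have o0: "0 \<le> ov" unfolding ov_def by simp
      show ?thesis
      proof (cases "0 \<le> c'")
        case True
        then have "ennreal (c' * ov + \<alpha>) = ennreal c' * ennreal ov + ennreal \<alpha>"
          using o0 \<alpha> by (simp add: ennreal_mult)
        then have "ennreal (c' * ov + \<alpha>) = ennreal c' * opt S d (s0, tsl) + ennreal \<alpha>"
          using ofin unfolding ov_def by simp
        then show ?thesis unfolding \<sigma> ov_def by simp
      next
        case False
        then have "c' * ov + \<alpha> \<le> \<alpha>" using o0 by (simp add: mult_nonpos_nonneg)
        then have "ennreal (c' * ov + \<alpha>) \<le> ennreal \<alpha>" by (rule ennreal_leI)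
        also have "\<dots> \<le> ennreal c' * opt S d \<sigma> + ennreal \<alpha>" by simp
        finally show ?thesis unfolding ov_def .
      qed
    qed
    finally show ?thesis .
  qed
  then have "rand_competitive S T d M c'" unfolding rand_competitive_def using \<alpha> by blast
  with ra show ?thesis by blast
qed

lemma sq_ineq:
  fixes a b t :: real
  assumes "0 \<le> t"
  shows "(max 0 (a + t * b))\<^sup>2 \<le> (max 0 a)\<^sup>2 + 2 * t * (max 0 a * b) + t\<^sup>2 * b\<^sup>2"
proof (cases "0 \<le> a")
  case True
  then have "(max 0 (a + t * b))\<^sup>2 \<le> (a + t * b)\<^sup>2"
    by (cases "0 \<le> a + t * b") (auto simp: max_def)
  also have "\<dots> = (max 0 a)\<^sup>2 + 2 * t * (max 0 a * b) + t\<^sup>2 * b\<^sup>2"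
    using True by (simp add: max_def power2_eq_square algebra_simps)
  finally show ?thesis .
next
  case False
  then have a: "a < 0" by simp
  show ?thesis
  proof (cases "0 \<le> a + t * b")
    case True
    then have "0 \<le> a + t * b" "a + t * b \<le> t * b" using a by auto
    then have "(a + t * b)\<^sup>2 \<le> (t * b)\<^sup>2" by (intro power_mono) auto
    then show ?thesis using True a by (simp add: max_def power_mult_distrib)
  next
    case False
    then show ?thesis using a by (simp add: max_def)
  qed
qed

lemma deriv_arg:
  fixes A B :: real
  assumes "\<And>t. 0 < t \<Longrightarrow> t \<le> 1 \<Longrightarrow> 0 \<le> 2 * t * A + t\<^sup>2 * B"
  shows "0 \<le> A"
proof (rule ccontr)
  assume "\<not> 0 \<le> A"
  then have A: "A < 0" by simp
  show False
  proof (cases "B \<le> 0")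
    case True
    then show False using assms[of 1] A by simp
  next
    case False
    define t where "t = min 1 (- A / B)"
    have t0: "0 < t" unfolding t_def using A False by (simp add: field_simps)
    have t1: "t \<le> 1" unfolding t_def by simp
    have "t * B \<le> - A" unfolding t_def using False by (simp add: min_def field_simps)
    then have "t * (t * B) \<le> t * (- A)" using t0 by (intro mult_left_mono) auto
    then have "2 * t * A + t\<^sup>2 * B \<le> t * A" by (simp add: power2_eq_square algebra_simps)
    also have "\<dots> < 0" using t0 A by (simp add: mult_pos_neg)
    finally show False using assms[OF t0 t1] by simp
  qed
qed

lemma minimax:
  fixes F :: "('i \<Rightarrow> real) set" and v :: "'k \<Rightarrow> ('i \<Rightarrow> real) \<Rightarrow> real" and K :: "'k set"
  assumes cF: "compact F" and neF: "F \<noteq> {}" and fK: "finite K"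
    and conv: "\<And>a b t. a \<in> F \<Longrightarrow> b \<in> F \<Longrightarrow> 0 \<le> t \<Longrightarrow> t \<le> 1 \<Longrightarrow> (\<lambda>i. a i + t * (b i - a i)) \<in> F"
    and aff: "\<And>k a b t. k \<in> K \<Longrightarrow> a \<in> F \<Longrightarrow> b \<in> F \<Longrightarrow> v k (\<lambda>i. a i + t * (b i - a i)) = v k a + t * (v k b - v k a)"
    and cont: "\<And>k. k \<in> K \<Longrightarrow> continuous_on F (v k)"
    and hyp: "\<And>w. (\<forall>k\<in>K. 0 \<le> w k) \<Longrightarrow> 0 < (\<Sum>k\<in>K. w k) \<Longrightarrow> \<exists>a\<in>F. (\<Sum>k\<in>K. w k * v k a) < 0"
  shows "\<exists>a\<in>F. \<forall>k\<in>K. v k a \<le> 0"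
proof -
  define g where "g = (\<lambda>a. \<Sum>k\<in>K. (max 0 (v k a))\<^sup>2)"
  have "continuous_on F g" unfolding g_def by (intro continuous_intros cont)
  then obtain a where aF: "a \<in> F" and amin: "\<And>b. b \<in> F \<Longrightarrow> g a \<le> g b"
    using continuous_attains_inf[OF cF neF] by blast
  show ?thesis
  proof (cases "g a = 0")
    case True
    then have "\<forall>k\<in>K. (max 0 (v k a))\<^sup>2 = 0" unfolding g_def using fK
      by (subst (asm) sum_nonneg_eq_0_iff) auto
    then have "\<forall>k\<in>K. 0 \<le> v k a \<longrightarrow> v k a = 0" by (auto simp: max_def split: if_splits)
    then have "\<forall>k\<in>K. v k a \<le> 0" by force
    then show ?thesis using aF by blast
  next
    case False
    define w where "w = (\<lambda>k. max 0 (v k a))"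
    have w0: "\<forall>k\<in>K. 0 \<le> w k" unfolding w_def by simp
    have ga: "g a = (\<Sum>k\<in>K. w k * v k a)"
      unfolding g_def w_def by (intro sum.cong refl) (simp add: max_def power2_eq_square)
    have gpos: "0 < g a" using False unfolding g_def by (simp add: less_le sum_nonneg)
    have wpos: "0 < (\<Sum>k\<in>K. w k)"
    proof (rule ccontr)
      assume "\<not> 0 < (\<Sum>k\<in>K. w k)"
      then have "(\<Sum>k\<in>K. w k) = 0" using w0 by (meson not_less order.antisym sum_nonneg)
      then have "\<forall>k\<in>K. w k = 0" using w0 fK by (simp add: sum_nonneg_eq_0_iff)
      then have "g a = 0" unfolding ga by simp
      then show False using False by simp
    qed
    have geq: "g a \<le> (\<Sum>k\<in>K. w k * v k b)" if bF: "b \<in> F" for b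
    proof -
      define A where "A = (\<Sum>k\<in>K. w k * (v k b - v k a))"
      define B where "B = (\<Sum>k\<in>K. (v k b - v k a)\<^sup>2)"
      have "0 \<le> 2 * t * A + t\<^sup>2 * B" if t: "0 < t" "t \<le> 1" for t
      proof -
        have "g a \<le> g (\<lambda>i. a i + t * (b i - a i))" using conv[OF aF bF, of t] t amin by simp
        also have "\<dots> = (\<Sum>k\<in>K. (max 0 (v k a + t * (v k b - v k a)))\<^sup>2)"
          unfolding g_def using aff aF bF by simp
        also have "\<dots> \<le> (\<Sum>k\<in>K. (max 0 (v k a))\<^sup>2 + 2 * t * (w k * (v k b - v k a)) + t\<^sup>2 * (v k b - v k a)\<^sup>2)"
          unfolding w_def using t by (intro sum_mono sq_ineq) auto
        also have "\<dots> = g a + 2 * t * A + t\<^sup>2 * B"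
          unfolding g_def A_def B_def by (simp add: sum.distrib sum_distrib_left)
        finally show ?thesis by simp
      qed
      then have "0 \<le> A" by (rule deriv_arg)
      then show ?thesis unfolding ga A_def by (simp add: right_diff_distrib sum_subtractf)
    qed
    obtain b where bF: "b \<in> F" and "(\<Sum>k\<in>K. w k * v k b) < 0" using hyp[OF w0 wpos] by blast
    then show ?thesis using geq[OF bF] gpos by simp
  qed
qed

definition stt :: "'s det_alg \<Rightarrow> 's \<Rightarrow> 's task list \<Rightarrow> 's" where
  "stt D s0 ts = (if ts = [] then s0 else D (s0, ts))"

definition dflow :: "'s det_alg \<Rightarrow> 's fl" where
  "dflow D = (\<lambda>(s0, ts, x, z). if ts \<noteq> [] \<and> x = stt D s0 (butlast ts) \<and> z = stt D s0 ts then 1 else 0)"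

lemma stt_in:
  assumes "valid_det S T D" "s0 \<in> S" "set ts \<subseteq> T"
  shows "stt D s0 ts \<in> S"
  using assms unfolding stt_def valid_det_def by auto

lemma dflow_flow:
  assumes ts: "task_system S T d" and fin: "finite S" and v: "valid_det S T D"
  shows "flow S T (dflow D)"
  unfolding flow_def
proof (intro conjI ballI allI impI)
  fix i show "0 \<le> dflow D i" "dflow D i \<le> 1" unfolding dflow_def by (auto split: prod.split)
next
  fix s0 pre t x assume s0: "s0 \<in> S" and pre: "set pre \<subseteq> T" and t: "t \<in> T" and x: "x \<in> S"
  have sin: "stt D s0 (pre@[t]) \<in> S" using stt_in[OF v s0, of "pre@[t]"] pre t by auto
  have "(\<Sum>z\<in>S. dflow D (s0, pre @ [t], x, z)) = (if x = stt D s0 pre then 1 else 0)"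
    unfolding dflow_def using sin fin by (simp add: sum.delta')
  also have "\<dots> = mu S (dflow D) s0 pre x"
  proof (cases "pre = []")
    case True then show ?thesis by (simp add: mu_def stt_def)
  next
    case False
    have bin: "stt D s0 (butlast pre) \<in> S"
      using stt_in[OF v s0, of "butlast pre"] pre by (meson in_set_butlastD subset_code(1))
    have "mu S (dflow D) s0 pre x = (\<Sum>y\<in>S. if y = stt D s0 (butlast pre) \<and> x = stt D s0 pre then 1 else 0)"
      unfolding mu_def dflow_def using False by simp
    also have "\<dots> = (if x = stt D s0 pre then 1 else 0)"
      using bin fin by (cases "x = stt D s0 pre") (simp_all add: sum.delta')
    finally show ?thesis by simp
  qed
  finally show "(\<Sum>z\<in>S. dflow D (s0, pre @ [t], x, z)) = mu S (dflow D) s0 pre x" .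
next
  fix s0 pre t x z assume s0: "s0 \<in> S" and pre: "set pre \<subseteq> T" and t: "t \<in> T" and x: "x \<in> S"
    and z: "z \<in> S" and tz: "t z = \<top>"
  have "set (pre@[t]) \<subseteq> T \<and> pre@[t] \<noteq> []" using pre t by auto
  with v s0 have "last (pre@[t]) (D (s0, pre@[t])) \<noteq> \<top>" unfolding valid_det_def by blast
  then have "t (stt D s0 (pre@[t])) \<noteq> \<top>" by (simp add: stt_def)
  then show "dflow D (s0, pre @ [t], x, z) = 0" using tz unfolding dflow_def by auto
qed

lemma dflow_cost:
  assumes ts: "task_system S T d" and fin: "finite S" and v: "valid_det S T D"
    and s0: "s0 \<in> S" and tsl: "set tsl \<subseteq> T"
  shows "FC S d (dflow D) s0 [] tsl = enn2real (alg_cost d D (s0, tsl))"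
proof -
  define a where "a = (\<lambda>i. stt D s0 (take i tsl))"
  have ain: "a i \<in> S" for i unfolding a_def using stt_in[OF v s0] tsl
    by (meson order_trans set_take_subset)
  have fin_t: "(tsl ! i) (a (Suc i)) \<noteq> \<top>" if "i < length tsl" for i
  proof -
    have "take (Suc i) tsl \<noteq> []" using that by (cases tsl) auto
    moreover have "last (take (Suc i) tsl) = tsl ! i" using that by (simp add: take_Suc_conv_app_nth)
    moreover have "set (take (Suc i) tsl) \<subseteq> T" using tsl by (meson order_trans set_take_subset)
    ultimately have "last (take (Suc i) tsl) (D (s0, take (Suc i) tsl)) \<noteq> \<top>"
      using v s0 unfolding valid_det_def by blast
    then show ?thesis using \<open>take (Suc i) tsl \<noteq> []\<close> \<open>last (take (Suc i) tsl) = tsl ! i\<close>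
      unfolding a_def stt_def by simp
  qed
  have "FC S d (dflow D) s0 [] tsl = (\<Sum>i<length tsl. d (a i) (a (Suc i)) + enn2real ((tsl!i) (a (Suc i))))"
    unfolding FC_def
  proof (intro sum.cong refl)
    fix i assume i: "i \<in> {..<length tsl}"
    have bl: "butlast (take (Suc i) tsl) = take i tsl" using i by (simp add: take_Suc_conv_app_nth)
    have ne: "take (Suc i) tsl \<noteq> []" using i by (cases tsl) auto
    have "(\<Sum>x\<in>S. \<Sum>z\<in>S. dflow D (s0, [] @ take (Suc i) tsl, x, z) * (d x z + enn2real ((tsl ! i) z)))
      = (\<Sum>x\<in>S. \<Sum>z\<in>S. if x = a i \<and> z = a (Suc i) then d x z + enn2real ((tsl ! i) z) else 0)"
      unfolding dflow_def a_def using bl ne by (intro sum.cong refl) auto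
    also have "\<dots> = (\<Sum>x\<in>S. if x = a i then d x (a (Suc i)) + enn2real ((tsl ! i) (a (Suc i))) else 0)"
      using ain fin by (intro sum.cong refl) (auto simp: if_distrib cong: if_cong)
    also have "\<dots> = d (a i) (a (Suc i)) + enn2real ((tsl ! i) (a (Suc i)))"
      using ain fin by simp
    finally show "(\<Sum>x\<in>S. \<Sum>z\<in>S. dflow D (s0, [] @ take (Suc i) tsl, x, z) * (d x z + enn2real ((tsl ! i) z)))
        = d (a i) (a (Suc i)) + enn2real ((tsl ! i) (a (Suc i)))" .
  qed
  also have "\<dots> = enn2real (\<Sum>i<length tsl. ennreal (d (a i) (a (Suc i))) + (tsl!i) (a (Suc i)))"
  proof -
    have "enn2real (\<Sum>i<length tsl. ennreal (d (a i) (a (Suc i))) + (tsl!i) (a (Suc i)))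
       = (\<Sum>i<length tsl. enn2real (ennreal (d (a i) (a (Suc i))) + (tsl!i) (a (Suc i))))"
      using fin_t by (subst enn2real_sum) (auto simp: less_top)
    also have "\<dots> = (\<Sum>i<length tsl. d (a i) (a (Suc i)) + enn2real ((tsl!i) (a (Suc i))))"
      using fin_t d_nn[OF ts ain ain] by (intro sum.cong refl) (simp add: enn2real_plus less_top)
    finally show ?thesis by simp
  qed
  also have "(\<Sum>i<length tsl. ennreal (d (a i) (a (Suc i))) + (tsl!i) (a (Suc i))) = alg_cost d D (s0, tsl)"
    unfolding alg_cost_def path_cost_def alg_states_def a_def stt_def
    by (intro sum.cong refl) (auto simp: nth_Cons')
  finally show ?thesis .
qed

definition comb :: "('i \<Rightarrow> real) \<Rightarrow> ('i \<Rightarrow> real) \<Rightarrow> real \<Rightarrow> 'i \<Rightarrow> real" where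
  "comb a b t = (\<lambda>i. a i + t * (b i - a i))"

lemma mu_comb: "mu S (comb a b t) s0 ts z = mu S a s0 ts z + t * (mu S b s0 ts z - mu S a s0 ts z)"
  unfolding mu_def comb_def by (simp add: sum.distrib sum_distrib_left sum_subtractf algebra_simps)

lemma FC_comb: "FC S d (comb a b t) s0 pre rest = FC S d a s0 pre rest + t * (FC S d b s0 pre rest - FC S d a s0 pre rest)"
  unfolding FC_def comb_def
  by (simp add: sum.distrib sum_distrib_left sum_subtractf algebra_simps)

lemma flow_box: "flow S T \<pi> \<Longrightarrow> 0 \<le> \<pi> i \<and> \<pi> i \<le> 1"
proof -
  assume "flow S T \<pi>"
  then have "\<forall>i. 0 \<le> \<pi> i \<and> \<pi> i \<le> 1" unfolding flow_def by (elim conjE)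
  then show ?thesis by (rule spec)
qed

lemma flow_sum: "flow S T \<pi> \<Longrightarrow> s0 \<in> S \<Longrightarrow> set pre \<subseteq> T \<Longrightarrow> t \<in> T \<Longrightarrow> x \<in> S \<Longrightarrow>
    (\<Sum>z\<in>S. \<pi> (s0, pre@[t], x, z)) = mu S \<pi> s0 pre x"
proof -
  assume "flow S T \<pi>" "s0 \<in> S" "set pre \<subseteq> T" "t \<in> T" "x \<in> S"
  moreover have "\<forall>s0\<in>S. \<forall>pre t. set pre \<subseteq> T \<longrightarrow> t \<in> T \<longrightarrow> (\<forall>x\<in>S. (\<Sum>z\<in>S. \<pi> (s0, pre@[t], x, z)) = mu S \<pi> s0 pre x)"
    using \<open>flow S T \<pi>\<close> unfolding flow_def by (elim conjE)
  ultimately show ?thesis by blast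
qed

lemma flow_zero: "flow S T \<pi> \<Longrightarrow> s0 \<in> S \<Longrightarrow> set pre \<subseteq> T \<Longrightarrow> t \<in> T \<Longrightarrow> x \<in> S \<Longrightarrow> z \<in> S \<Longrightarrow> t z = \<top> \<Longrightarrow>
    \<pi> (s0, pre@[t], x, z) = 0"
proof -
  assume "flow S T \<pi>" "s0 \<in> S" "set pre \<subseteq> T" "t \<in> T" "x \<in> S" "z \<in> S" "t z = \<top>"
  moreover have "\<forall>s0\<in>S. \<forall>pre t. set pre \<subseteq> T \<longrightarrow> t \<in> T \<longrightarrow> (\<forall>x\<in>S. \<forall>z\<in>S. t z = \<top> \<longrightarrow> \<pi> (s0, pre@[t], x, z) = 0)"
    using \<open>flow S T \<pi>\<close> unfolding flow_def by (elim conjE)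
  ultimately show ?thesis by blast
qed

lemma flow_comb:
  assumes a: "flow S T a" and b: "flow S T b" and t: "0 \<le> t" "t \<le> 1"
  shows "flow S T (comb a b t)"
proof -
  have 1: "\<forall>i. 0 \<le> comb a b t i \<and> comb a b t i \<le> 1"
  proof
    fix i
    have "0 \<le> a i" "a i \<le> 1" "0 \<le> b i" "b i \<le> 1" using flow_box[OF a] flow_box[OF b] by auto
    moreover have "a i + t * (b i - a i) = (1 - t) * a i + t * b i" by (simp add: algebra_simps)
    ultimately show "0 \<le> comb a b t i \<and> comb a b t i \<le> 1" unfolding comb_def using t
      by (smt (verit, best) mult_left_le mult_nonneg_nonneg)
  qed
  have 2: "\<forall>s0\<in>S. \<forall>pre t'. set pre \<subseteq> T \<longrightarrow> t' \<in> T \<longrightarrow> (\<forall>x\<in>S. (\<Sum>z\<in>S. comb a b t (s0, pre@[t'], x, z)) = mu S (comb a b t) s0 pre x)"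
  proof (intro ballI allI impI)
    fix s0 pre t' x assume h: "s0 \<in> S" "set pre \<subseteq> T" "t' \<in> T" "x \<in> S"
    show "(\<Sum>z\<in>S. comb a b t (s0, pre @ [t'], x, z)) = mu S (comb a b t) s0 pre x"
      unfolding mu_comb flow_sum[OF a h, symmetric] flow_sum[OF b h, symmetric]
      unfolding comb_def by (simp add: sum.distrib sum_distrib_left[symmetric] sum_subtractf)
  qed
  have 3: "\<forall>s0\<in>S. \<forall>pre t'. set pre \<subseteq> T \<longrightarrow> t' \<in> T \<longrightarrow> (\<forall>x\<in>S. \<forall>z\<in>S. t' z = \<top> \<longrightarrow> comb a b t (s0, pre@[t'], x, z) = 0)"
    unfolding comb_def using flow_zero[OF a] flow_zero[OF b] by simp
  show ?thesis unfolding flow_def using 1 2 3 by blast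
qed

lemma cont_coord [continuous_intros]: "continuous_on A (\<lambda>\<pi>::'i \<Rightarrow> real. \<pi> i)"
  by (rule continuous_on_subset[OF continuous_on_product_coordinates]) simp

lemma cont_FC [continuous_intros]: "continuous_on A (\<lambda>\<pi>. FC S d \<pi> s0 pre rest)"
  unfolding FC_def by (intro continuous_intros)

lemma cont_mu [continuous_intros]: "continuous_on A (\<lambda>\<pi>. mu S \<pi> s0 ts z)"
  unfolding mu_def by (cases "ts = []") (simp, simp, intro continuous_intros)

lemma closed_flow: "closed {\<pi>. flow S T \<pi>}"
  unfolding flow_def Ball_def
  by (intro closed_Collect_conj closed_Collect_all closed_Collect_imp open_Collect_const
        closed_Collect_eq closed_Collect_le continuous_intros)

lemma compact_flow: "compact {\<pi>. flow S T \<pi>}"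
proof -
  have "compactin (product_topology (\<lambda>_. euclidean) UNIV) (PiE UNIV (\<lambda>_::'a \<times> 'a task list \<times> 'a \<times> 'a. {0..1::real}))"
    by (simp add: compactin_PiE)
  then have c: "compact (PiE UNIV (\<lambda>_::'a \<times> 'a task list \<times> 'a \<times> 'a. {0..1::real}))"
    by (simp add: euclidean_product_topology)
  have "{\<pi>. flow S T \<pi>} = PiE UNIV (\<lambda>_. {0..1}) \<inter> {\<pi>. flow S T \<pi>}"
    unfolding flow_def by (auto simp: PiE_UNIV_domain)
  also have "compact \<dots>" by (rule compact_Int_closed[OF c closed_flow])
  finally show ?thesis .
qed

theorem theorem6:
  fixes S :: "'s set" and T :: "'s task set" and d :: "'s \<Rightarrow> 's \<Rightarrow> real"
  assumes "lazy_task_system S T d" and "finite S" and "finite T"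
  shows "compact_problem S T d"
  unfolding compact_problem_def
proof (intro allI impI)
  fix c \<epsilon> \<alpha> :: real
  assume cH: "1 < c \<and> (\<forall>M. rand_alg S T M \<longrightarrow> (\<forall>c'<c. \<not> rand_competitive S T d M c'))"
  assume \<epsilon>: "0 < \<epsilon>" and \<alpha>: "0 \<le> \<alpha>"
  have ts: "task_system S T d" using assms(1) unfolding lazy_task_system_def by blast
  have fin: "finite S" and finT: "finite T" using assms by auto
  show "\<exists>p :: ('s \<times> 's task list) pmf. finite (set_pmf p) \<and> set_pmf p \<subseteq> inputs S T \<and>
             (\<forall>D. valid_det S T D \<longrightarrow>
                measure_pmf.expectation p (\<lambda>\<sigma>. enn2real (alg_cost d D \<sigma>))
                  \<ge> (c - \<epsilon>) * measure_pmf.expectation p (\<lambda>\<sigma>. enn2real (opt S d \<sigma>)) + \<alpha>)"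
  proof (rule ccontr)
    assume neg: "\<not> (\<exists>p :: ('s \<times> 's task list) pmf. finite (set_pmf p) \<and> set_pmf p \<subseteq> inputs S T \<and>
             (\<forall>D. valid_det S T D \<longrightarrow>
                measure_pmf.expectation p (\<lambda>\<sigma>. enn2real (alg_cost d D \<sigma>))
                  \<ge> (c - \<epsilon>) * measure_pmf.expectation p (\<lambda>\<sigma>. enn2real (opt S d \<sigma>)) + \<alpha>))"
    define F where "F = {\<pi>::'s fl. flow S T \<pi>}"
    define I where "I = (\<lambda>n. {\<sigma>::'s \<times> 's task list. fst \<sigma> \<in> S \<and> set (snd \<sigma>) \<subseteq> T \<and> length (snd \<sigma>) \<le> n})"
    define B where "B = (\<lambda>\<sigma>. (c - \<epsilon>) * enn2real (opt S d \<sigma>) + \<alpha>)"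
    define v where "v = (\<lambda>\<sigma> \<pi>. FC S d \<pi> (fst \<sigma>) [] (snd \<sigma>) - B \<sigma>)"
    define Gs where "Gs = (\<lambda>n. {\<pi>. \<forall>\<sigma>\<in>I n. v \<sigma> \<pi> \<le> 0})"
    have finI: "finite (I n)" for n
    proof -
      have "I n = S \<times> {xs. set xs \<subseteq> T \<and> length xs \<le> n}" unfolding I_def by auto
      then show ?thesis using fin finT by (simp add: finite_lists_length_le)
    qed
    have Iinp: "I n \<subseteq> inputs S T" for n unfolding I_def inputs_def by auto
    have Imono: "n \<le> m \<Longrightarrow> I n \<subseteq> I m" for n m unfolding I_def by auto
    define D0 where "D0 = (\<lambda>(s0::'s, tsl::'s task list). good S (last tsl))"
    have vD0: "valid_det S T D0"
      unfolding valid_det_def D0_def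
    proof (intro ballI allI impI)
      fix s0 tsl assume "s0 \<in> S" "set tsl \<subseteq> T \<and> tsl \<noteq> []"
      then have "last tsl \<in> T" using last_in_set by blast
      then show "(case (s0, tsl) of (s0, tsl) \<Rightarrow> good S (last tsl)) \<in> S \<and>
          last tsl (case (s0, tsl) of (s0, tsl) \<Rightarrow> good S (last tsl)) \<noteq> \<top>"
        using good[OF _ ts] by simp
    qed
    have neF: "F \<noteq> {}" using dflow_flow[OF ts fin vD0] unfolding F_def by blast
    have cF: "compact F" unfolding F_def by (rule compact_flow)
    have level: "F \<inter> Gs n \<noteq> {}" for n
    proof -
      have "\<exists>a\<in>F. \<forall>\<sigma>\<in>I n. v \<sigma> a \<le> 0"
      proof (rule minimax[OF cF neF finI])
        fix a b :: "'s fl" and t :: real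
        assume "a \<in> F" "b \<in> F" "0 \<le> t" "t \<le> 1"
        then show "(\<lambda>i. a i + t * (b i - a i)) \<in> F"
          using flow_comb[of S T a b t] unfolding F_def comb_def by auto
      next
        fix \<sigma> and a b :: "'s fl" and t :: real
        show "v \<sigma> (\<lambda>i. a i + t * (b i - a i)) = v \<sigma> a + t * (v \<sigma> b - v \<sigma> a)"
          using FC_comb[of S d a b t "fst \<sigma>" "[]" "snd \<sigma>"] unfolding v_def comb_def
          by (simp add: algebra_simps)
      next
        fix \<sigma> show "continuous_on F (v \<sigma>)" unfolding v_def by (intro continuous_intros)
      next
        fix w :: "'s \<times> 's task list \<Rightarrow> real"
        assume w0: "\<forall>\<sigma>\<in>I n. 0 \<le> w \<sigma>" and Wpos: "0 < (\<Sum>\<sigma>\<in>I n. w \<sigma>)"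
        define W where "W = (\<Sum>\<sigma>\<in>I n. w \<sigma>)"
        define f where "f = (\<lambda>\<sigma>. if \<sigma> \<in> I n then w \<sigma> / W else 0)"
        have fnn: "\<And>\<sigma>. 0 \<le> f \<sigma>" unfolding f_def W_def using w0 Wpos by auto
        have sf: "(\<Sum>\<sigma>\<in>I n. f \<sigma>) = 1"
          unfolding f_def W_def using Wpos by (simp add: sum_divide_distrib[symmetric])
        have "(\<integral>\<^sup>+\<sigma>. ennreal (f \<sigma>) \<partial>count_space UNIV) = (\<Sum>\<sigma>\<in>I n. ennreal (f \<sigma>))"
          by (rule nn_integral_count_space') (auto simp: finI f_def)
        also have "\<dots> = 1" using fnn sf by simp
        finally have int1: "(\<integral>\<^sup>+\<sigma>. ennreal (f \<sigma>) \<partial>count_space UNIV) = 1" .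
        define p where "p = embed_pmf f"
        have pm: "pmf p \<sigma> = f \<sigma>" for \<sigma> unfolding p_def by (rule pmf_embed_pmf[OF fnn int1])
        have "set_pmf p = {\<sigma>. f \<sigma> \<noteq> 0}" unfolding p_def by (rule set_embed_pmf[OF fnn int1])
        then have sp: "set_pmf p \<subseteq> I n" unfolding f_def by auto
        have "finite (set_pmf p)" using finite_subset[OF sp finI] .
        moreover have "set_pmf p \<subseteq> inputs S T" using sp Iinp by blast
        ultimately obtain D where vD: "valid_det S T D" and
          lt: "measure_pmf.expectation p (\<lambda>\<sigma>. enn2real (alg_cost d D \<sigma>))
                  < (c - \<epsilon>) * measure_pmf.expectation p (\<lambda>\<sigma>. enn2real (opt S d \<sigma>)) + \<alpha>"
          using neg by force
        have E: "measure_pmf.expectation p g = (\<Sum>\<sigma>\<in>I n. f \<sigma> * g \<sigma>)" for g :: "_ \<Rightarrow> real"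
          by (subst integral_measure_pmf[OF finI]) (use sp in \<open>auto simp: pm\<close>)
        define X where "X = (\<lambda>\<sigma>. enn2real (alg_cost d D \<sigma>) - B \<sigma>)"
        have "(\<Sum>\<sigma>\<in>I n. f \<sigma> * X \<sigma>) = (\<Sum>\<sigma>\<in>I n. f \<sigma> * enn2real (alg_cost d D \<sigma>))
              - ((c - \<epsilon>) * (\<Sum>\<sigma>\<in>I n. f \<sigma> * enn2real (opt S d \<sigma>)) + \<alpha> * (\<Sum>\<sigma>\<in>I n. f \<sigma>))"
          unfolding X_def B_def
          by (simp add: algebra_simps sum_subtractf sum.distrib sum_distrib_left)
        also have "\<dots> < 0" using lt unfolding E sf by simp
        finally have neg1: "(\<Sum>\<sigma>\<in>I n. f \<sigma> * X \<sigma>) < 0" .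
        have "(\<Sum>\<sigma>\<in>I n. w \<sigma> * X \<sigma>) = W * (\<Sum>\<sigma>\<in>I n. f \<sigma> * X \<sigma>)"
          unfolding sum_distrib_left f_def W_def using Wpos by (intro sum.cong refl) auto
        also have "\<dots> < 0" using neg1 Wpos unfolding W_def by (simp add: mult_pos_neg)
        finally have "(\<Sum>\<sigma>\<in>I n. w \<sigma> * X \<sigma>) < 0" .
        moreover have "(\<Sum>\<sigma>\<in>I n. w \<sigma> * v \<sigma> (dflow D)) = (\<Sum>\<sigma>\<in>I n. w \<sigma> * X \<sigma>)"
        proof (intro sum.cong refl)
          fix \<sigma> assume "\<sigma> \<in> I n"
          then have "fst \<sigma> \<in> S" "set (snd \<sigma>) \<subseteq> T" unfolding I_def by auto
          then show "w \<sigma> * v \<sigma> (dflow D) = w \<sigma> * X \<sigma>"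
            unfolding v_def X_def using dflow_cost[OF ts fin vD, of "fst \<sigma>" "snd \<sigma>"] by simp
        qed
        moreover have "dflow D \<in> F" unfolding F_def using dflow_flow[OF ts fin vD] by simp
        ultimately have "dflow D \<in> F \<and> (\<Sum>\<sigma>\<in>I n. w \<sigma> * v \<sigma> (dflow D)) < 0" by linarith
        then show "\<exists>a\<in>F. (\<Sum>\<sigma>\<in>I n. w \<sigma> * v \<sigma> a) < 0" by blast
      qed
      then show ?thesis unfolding Gs_def by blast
    qed
    have clG: "closed (Gs n)" for n
      unfolding Gs_def v_def Ball_def
      by (intro closed_Collect_all closed_Collect_imp open_Collect_const closed_Collect_le continuous_intros)
    have "F \<inter> \<Inter>(range Gs) \<noteq> {}"
    proof (rule compact_fip[THEN iffD1, OF cF, rule_format])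
      show "\<And>a. a \<in> range Gs \<Longrightarrow> closed a" using clG by auto
    next
      fix Bs assume Bs: "Bs \<subseteq> range Gs" "finite Bs"
      then obtain N where N: "finite N" "Bs = Gs ` N" by (meson finite_subset_image)
      define m where "m = Max (insert 0 N)"
      have "Gs m \<subseteq> Gs k" if "k \<in> N" for k
      proof -
        have "k \<le> m" unfolding m_def using N(1) that by simp
        then show ?thesis unfolding Gs_def using Imono by blast
      qed
      then have "F \<inter> Gs m \<subseteq> F \<inter> \<Inter>Bs" using N(2) by auto
      then show "F \<inter> \<Inter>Bs \<noteq> {}" using level[of m] by blast
    qed
    then obtain \<pi> where \<pi>F: "\<pi> \<in> F" and \<pi>G: "\<And>n. \<pi> \<in> Gs n" by blast
    have gd: "FC S d \<pi> s0 [] tsl \<le> (c - \<epsilon>) * enn2real (opt S d (s0, tsl)) + \<alpha>"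
      if "s0 \<in> S" "set tsl \<subseteq> T" for s0 tsl
    proof -
      have "(s0, tsl) \<in> I (length tsl)" unfolding I_def using that by simp
      then show ?thesis using \<pi>G[of "length tsl"] unfolding Gs_def v_def B_def by fastforce
    qed
    obtain M where "rand_alg S T M" "rand_competitive S T d M (c - \<epsilon>)"
      using flow_competitive[OF ts fin finT _ \<alpha> gd] \<pi>F unfolding F_def by blast
    then show False using cH \<epsilon> by force
  qed
qed

end
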